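(* Every realizable rooted chirotope $(\chi,u)$ with ground set $X$ has a realization $\mathcal P=\{\mathfrak p_x\}_{x\in X}$ such that $\mathfrak p_u=(0,1)$, $\mathfrak p_{u^+}=(0,0)$, $\mathfrak p_{u^-}=(1,0)$, and the half-line $\mathfrak p_u+\mathbb R_{\ge 0}(0,1)$ does not cross any line of the set $\{(\mathfrak p_x\mathfrak p_y): x,y\in X\setminus\{u\},\ x\ne y\}$.
   Context: A chirotope on a finite set $X$ is a map $\chi$ from ordered triples of distinct elements of $X$ to $\{-1,1\}$ satisfying the usual alternating symmetry and the interiority and transitivity axioms. It is realizable if there exist points $\mathfrak p_x\in\mathbb R^2$ ($x\in X$), no three collinear, such that $\chi(x,y,z)=1$ iff $\mathfrak p_x,\mathfrak p_y,\mathfrak p_z$ are in counterclockwise order; such a point family is a realization of $\chi$. An element $u$ is extreme if there is $y\ne u$ with $\chi(u,y,z)$ constant over $z\in X\setminus\{u,y\}$ (for realizations: $\mathfrak p_u$ is a vertex of the convex hull). A rooted chirotope is a pair $(\chi,u)$ with $u$ an extreme element of $\chi$; $u^+$ and $u^-$ denote the successor and predecessor of $u$, in counterclockwise order, on the convex hull of $\chi$ (i.e. $u^+$ is the element $y$ with $\chi(u,y,z)=1$ for all $z\notin\{u,y\}$, and $u^-$ the element $y$ with $\chi(y,u,z)=1$ for all $z\notin\{u,y\}$). *)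

theory Defs
  imports "HOL-Analysis.Analysis"
begin

type_synonym 'a chi = "'a \<Rightarrow> 'a \<Rightarrow> 'a \<Rightarrow> int"

definition distinct3 :: "'a \<Rightarrow> 'a \<Rightarrow> 'a \<Rightarrow> bool" where
  "distinct3 x y z \<longleftrightarrow> x \<noteq> y \<and> y \<noteq> z \<and> x \<noteq> z"

text \<open>Chirotope on X (Knuth's CC-system axioms); only values on ordered triples of
  distinct elements of X matter.\<close>
definition chirotope :: "'a set \<Rightarrow> 'a chi \<Rightarrow> bool" where
  "chirotope X ch \<longleftrightarrow>
     (\<forall>p\<in>X. \<forall>q\<in>X. \<forall>r\<in>X. distinct3 p q r \<longrightarrow>
        ch p q r \<in> {-1, 1} \<and> ch p q r = ch q r p \<and> ch p q r = - ch p r q) \<and>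
     (\<forall>p\<in>X. \<forall>q\<in>X. \<forall>r\<in>X. \<forall>t\<in>X. distinct3 p q r \<and> t \<notin> {p, q, r} \<longrightarrow>
        ch t q r = 1 \<and> ch p t r = 1 \<and> ch p q t = 1 \<longrightarrow> ch p q r = 1) \<and>
     (\<forall>p\<in>X. \<forall>q\<in>X. \<forall>r\<in>X. \<forall>s\<in>X. \<forall>t\<in>X.
        distinct3 p q r \<and> s \<notin> {p, q, r} \<and> t \<notin> {p, q, r, s} \<longrightarrow>
        ch t s p = 1 \<and> ch t s q = 1 \<and> ch t s r = 1 \<and> ch t p q = 1 \<and> ch t q r = 1
        \<longrightarrow> ch t p r = 1)"

text \<open>Orientation determinant: positive iff a, b, c are in counterclockwise order.\<close>
definition orient :: "real \<times> real \<Rightarrow> real \<times> real \<Rightarrow> real \<times> real \<Rightarrow> real" where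
  "orient a b c = (fst b - fst a) * (snd c - snd a) - (snd b - snd a) * (fst c - fst a)"

definition is_realization :: "'a set \<Rightarrow> 'a chi \<Rightarrow> ('a \<Rightarrow> real \<times> real) \<Rightarrow> bool" where
  "is_realization X ch P \<longleftrightarrow>
     (\<forall>x\<in>X. \<forall>y\<in>X. \<forall>z\<in>X. distinct3 x y z \<longrightarrow>
        orient (P x) (P y) (P z) \<noteq> 0 \<and> (ch x y z = 1 \<longleftrightarrow> orient (P x) (P y) (P z) > 0))"

definition realizable :: "'a set \<Rightarrow> 'a chi \<Rightarrow> bool" where
  "realizable X ch \<longleftrightarrow> (\<exists>P. is_realization X ch P)"

definition extreme :: "'a set \<Rightarrow> 'a chi \<Rightarrow> 'a \<Rightarrow> bool" where
  "extreme X ch u \<longleftrightarrow> u \<in> X \<and>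
     (\<exists>y\<in>X. y \<noteq> u \<and> (\<exists>c. \<forall>z\<in>X - {u, y}. ch u y z = c))"

definition rooted_chirotope :: "'a set \<Rightarrow> 'a chi \<Rightarrow> 'a \<Rightarrow> bool" where
  "rooted_chirotope X ch u \<longleftrightarrow> chirotope X ch \<and> extreme X ch u"

text \<open>Successor u^+ and predecessor u^- of u on the convex hull.\<close>
definition hull_succ :: "'a set \<Rightarrow> 'a chi \<Rightarrow> 'a \<Rightarrow> 'a" where
  "hull_succ X ch u = (THE y. y \<in> X \<and> y \<noteq> u \<and> (\<forall>z\<in>X - {u, y}. ch u y z = 1))"

definition hull_pred :: "'a set \<Rightarrow> 'a chi \<Rightarrow> 'a \<Rightarrow> 'a" where
  "hull_pred X ch u = (THE y. y \<in> X \<and> y \<noteq> u \<and> (\<forall>z\<in>X - {u, y}. ch y u z = 1))"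

definition line_through :: "real \<times> real \<Rightarrow> real \<times> real \<Rightarrow> (real \<times> real) set" where
  "line_through a b = {a + t *\<^sub>R (b - a) | t. True}"

definition upward_ray :: "real \<times> real \<Rightarrow> (real \<times> real) set" where
  "upward_ray a = {a + t *\<^sub>R (0, 1) | t. t \<ge> 0}"

end

theory Submission
  imports Defs
begin
lemma proj:
  fixes x1 y1 d1 x2 y2 d2 x3 y3 d3 :: real
  assumes "d1 \<noteq> 0" "d2 \<noteq> 0" "d3 \<noteq> 0"
  shows "orient (x1/d1, y1/d1) (x2/d2, y2/d2) (x3/d3, y3/d3) =
    (x1*(y2*d3 - y3*d2) - y1*(x2*d3-x3*d2) + d1*(x2*y3-x3*y2))/(d1*d2*d3)"
proof -
  have "orient (x1/d1, y1/d1) (x2/d2, y2/d2) (x3/d3, y3/d3) =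
     (x2/d2 - x1/d1) * (y3/d3 - y1/d1) - (y2/d2 - y1/d1) * (x3/d3 - x1/d1)"
    by (simp add: orient_def)
  also have "\<dots> = (x1*(y2*d3 - y3*d2) - y1*(x2*d3-x3*d2) + d1*(x2*y3-x3*y2))/(d1*d2*d3)"
    using assms by (simp add: field_simps)
  finally show ?thesis .
qed

definition hom :: "real \<Rightarrow> real \<times> real \<Rightarrow> real \<times> real" where
  "hom e p = (fst p / (1 - (1 - e) * snd p), e * snd p / (1 - (1 - e) * snd p))"

lemma orient_hom:
  assumes "1 - (1 - e) * snd a \<noteq> 0" "1 - (1 - e) * snd b \<noteq> 0" "1 - (1 - e) * snd c \<noteq> 0"
  shows "orient (hom e a) (hom e b) (hom e c) =
    e * orient a b c / ((1 - (1 - e) * snd a) * (1 - (1 - e) * snd b) * (1 - (1 - e) * snd c))"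
proof -
  have "orient (hom e a) (hom e b) (hom e c) = (fst a * (e * snd b * (1 - (1 - e) * snd c) - e * snd c * (1 - (1 - e) * snd b)) -
     e * snd a * (fst b * (1 - (1 - e) * snd c) - fst c * (1 - (1 - e) * snd b)) +
     (1 - (1 - e) * snd a) * (fst b * (e * snd c) - fst c * (e * snd b))) /
    ((1 - (1 - e) * snd a) * (1 - (1 - e) * snd b) * (1 - (1 - e) * snd c))"
    unfolding hom_def using proj[OF assms] by simp
  also have "(fst a * (e * snd b * (1 - (1 - e) * snd c) - e * snd c * (1 - (1 - e) * snd b)) -
     e * snd a * (fst b * (1 - (1 - e) * snd c) - fst c * (1 - (1 - e) * snd b)) +
     (1 - (1 - e) * snd a) * (fst b * (e * snd c) - fst c * (e * snd b))) = e * orient a b c"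
    by (simp add: orient_def algebra_simps)
  finally show ?thesis .
qed

definition aff :: "real \<times> real \<Rightarrow> real \<times> real \<Rightarrow> real \<times> real \<Rightarrow> real \<times> real \<Rightarrow> real \<times> real" where
  "aff a0 e1 e2 p = (((fst p - fst a0) * snd e2 - (snd p - snd a0) * fst e2) / (fst e1 * snd e2 - snd e1 * fst e2),
     (fst e1 * (snd p - snd a0) - snd e1 * (fst p - fst a0)) / (fst e1 * snd e2 - snd e1 * fst e2))"

lemma orient_aff:
  assumes "fst e1 * snd e2 - snd e1 * fst e2 \<noteq> 0"
  shows "orient (aff a0 e1 e2 a) (aff a0 e1 e2 b) (aff a0 e1 e2 c) = orient a b c / (fst e1 * snd e2 - snd e1 * fst e2)"
proof -
  define dd where "dd = fst e1 * snd e2 - snd e1 * fst e2"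
  define L where "L = (\<lambda>p. ((fst p - fst a0) * snd e2 - (snd p - snd a0) * fst e2,
     fst e1 * (snd p - snd a0) - snd e1 * (fst p - fst a0)))"
  have dd: "dd \<noteq> 0" using assms dd_def by simp
  have "\<And>p. aff a0 e1 e2 p = (fst (L p) / dd, snd (L p) / dd)" unfolding aff_def L_def dd_def by simp
  then have "orient (aff a0 e1 e2 a) (aff a0 e1 e2 b) (aff a0 e1 e2 c) =
     (fst (L a)*(snd (L b)*dd - snd (L c)*dd) - snd (L a)*(fst (L b)*dd-fst (L c)*dd) + dd*(fst (L b)* snd (L c)-fst (L c)* snd (L b)))/(dd*dd*dd)"
    using proj[OF dd dd dd] by simp
  also have "(fst (L a)*(snd (L b)*dd - snd (L c)*dd) - snd (L a)*(fst (L b)*dd-fst (L c)*dd) + dd*(fst (L b)* snd (L c)-fst (L c)* snd (L b)))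
     = (orient a b c * dd) * dd"
    unfolding L_def dd_def by (simp add: orient_def algebra_simps)
  finally show ?thesis using dd unfolding dd_def[symmetric] by (simp add: power2_eq_square)
qed
lemma orient_cyc: "orient a b c = orient b c a"
  by (simp add: orient_def algebra_simps)

lemma orient_swap: "orient a c b = - orient a b c"
  by (simp add: orient_def algebra_simps)

lemma orient_line: "orient a b (a + s *\<^sub>R (b - a)) = 0"
  by (simp add: orient_def algebra_simps)

lemma orient_vert: "orient a b (0, Y) = orient a b (0, 1) + (Y - 1) * (fst b - fst a)"
  by (simp add: orient_def algebra_simps)

lemma finite_total_min:
  assumes "finite S" "S \<noteq> {}"
    and "\<forall>a\<in>S. \<forall>b\<in>S. \<forall>c\<in>S. R a b \<longrightarrow> R b c \<longrightarrow> R a c"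
    and "\<forall>a\<in>S. \<forall>b\<in>S. a \<noteq> b \<longrightarrow> R a b \<or> R b a"
  shows "\<exists>m\<in>S. \<forall>z\<in>S. z \<noteq> m \<longrightarrow> R m z"
  using assms
proof (induction S rule: finite_ne_induct)
  case (singleton x) then show ?case by auto
next
  case (insert x F)
  have tr: "\<forall>a\<in>F. \<forall>b\<in>F. \<forall>c\<in>F. R a b \<longrightarrow> R b c \<longrightarrow> R a c"
    using insert.prems(1) by blast
  have to: "\<forall>a\<in>F. \<forall>b\<in>F. a \<noteq> b \<longrightarrow> R a b \<or> R b a"
    using insert.prems(2) by blast
  obtain m where m: "m \<in> F" "\<forall>z\<in>F. z \<noteq> m \<longrightarrow> R m z" using insert.IH[OF tr to] by blast
  have xm: "x \<noteq> m" using m(1) insert.hyps by blast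
  show ?case
  proof (cases "R x m")
    case True
    have "\<forall>z\<in>insert x F. z \<noteq> x \<longrightarrow> R x z"
    proof (intro ballI impI)
      fix z assume z: "z \<in> insert x F" "z \<noteq> x"
      then have zF: "z \<in> F" by blast
      show "R x z"
      proof (cases "z = m")
        case True then show ?thesis using \<open>R x m\<close> by simp
      next
        case False
        then have "R m z" using m zF by blast
        moreover have "x \<in> insert x F" "m \<in> insert x F" "z \<in> insert x F" using m zF by auto
        ultimately show ?thesis using insert.prems(1) \<open>R x m\<close> by blast
      qed
    qed
    then show ?thesis by blast
  next
    case False
    have "x \<in> insert x F" "m \<in> insert x F" using m by auto
    then have "R m x" using False insert.prems(2) xm by blast
    then have "\<forall>z\<in>insert x F. z \<noteq> m \<longrightarrow> R m z" using m by blast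
    then show ?thesis using m by blast
  qed
qed

lemma finite_pos_lower:
  assumes "finite S" "\<forall>p\<in>S. f p > (0::real)"
  shows "\<exists>d>0. \<forall>p\<in>S. d \<le> f p"
proof (intro exI conjI ballI)
  show "0 < Min (insert 1 (f ` S))" using assms by auto
  fix p assume "p \<in> S" then show "Min (insert 1 (f ` S)) \<le> f p" using assms by auto
qed

lemma trans_geom:
  fixes U V A B C :: "real \<times> real"
  assumes "orient U A B > 0" "orient U B C > 0" "orient U C A > 0"
    and "s * orient U V A \<ge> 0" "s * orient U V B \<ge> 0" "s * orient U V C \<ge> 0"
    and "s * orient U V A > 0 \<or> s * orient U V B > 0"
  shows False
proof -
  have id: "orient U B C * (s * orient U V A) + orient U C A * (s * orient U V B) + orient U A B * (s * orient U V C) = 0"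
    by (simp add: orient_def algebra_simps)
  have "orient U B C * (s * orient U V A) \<ge> 0" "orient U C A * (s * orient U V B) \<ge> 0" "orient U A B * (s * orient U V C) \<ge> 0"
    using assms by auto
  moreover have "orient U B C * (s * orient U V A) > 0 \<or> orient U C A * (s * orient U V B) > 0"
    using assms by auto
  ultimately show False using id by linarith
qed

lemma realiz_transfer:
  assumes "is_realization X ch Q"
    and "\<forall>x\<in>X. \<forall>y\<in>X. \<forall>z\<in>X. distinct3 x y z \<longrightarrow>
      (orient (P x) (P y) (P z) > 0 \<longleftrightarrow> orient (Q x) (Q y) (Q z) > 0) \<and>
      (orient (P x) (P y) (P z) = 0 \<longleftrightarrow> orient (Q x) (Q y) (Q z) = 0)"
  shows "is_realization X ch P"
  unfolding is_realization_def
proof (intro ballI impI)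
  fix x y z assume xyz: "x \<in> X" "y \<in> X" "z \<in> X" "distinct3 x y z"
  then have "orient (Q x) (Q y) (Q z) \<noteq> 0 \<and> (ch x y z = 1 \<longleftrightarrow> orient (Q x) (Q y) (Q z) > 0)"
    using assms(1) unfolding is_realization_def by blast
  moreover have "(orient (P x) (P y) (P z) > 0 \<longleftrightarrow> orient (Q x) (Q y) (Q z) > 0) \<and>
      (orient (P x) (P y) (P z) = 0 \<longleftrightarrow> orient (Q x) (Q y) (Q z) = 0)" using assms(2) xyz by blast
  ultimately show "orient (P x) (P y) (P z) \<noteq> 0 \<and> (ch x y z = 1 \<longleftrightarrow> orient (P x) (P y) (P z) > 0)" by blast
qed

lemma D_pos:
  fixes e y :: real
  assumes "y \<le> 1" "0 < e" "e < 1"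
  shows "1 - (1 - e) * y > 0"
proof -
  have "(1 - e) * y \<le> 1 - e" using mult_left_mono[of y 1 "1 - e"] assms by simp
  then show ?thesis using assms by linarith
qed

lemma orient_same: "orient a b b = 0" "orient a a b = 0"
  by (simp_all add: orient_def)

lemma aff_pts:
  assumes "fst e1 * snd e2 - snd e1 * fst e2 \<noteq> 0"
  shows "aff a0 e1 e2 a0 = (0, 0)" "aff a0 e1 e2 (a0 + e1) = (1, 0)" "aff a0 e1 e2 (a0 + e2) = (0, 1)"
  using assms by (simp_all add: aff_def algebra_simps)

lemma pos_scale:
  fixes k a :: real
  assumes "k > 0"
  shows "(k * a > 0 \<longleftrightarrow> a > 0) \<and> (k * a = 0 \<longleftrightarrow> a = 0)"
  using assms by (simp add: zero_less_mult_iff)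

theorem lemma2p4:
  fixes X :: "'a set" and ch :: "'a chi" and u :: 'a
  assumes "finite X" and "card X \<ge> 3"
    and "rooted_chirotope X ch u"
    and "realizable X ch"
  shows "\<exists>P. is_realization X ch P \<and>
           P u = (0, 1) \<and> P (hull_succ X ch u) = (0, 0) \<and> P (hull_pred X ch u) = (1, 0) \<and>
           (\<forall>x\<in>X - {u}. \<forall>y\<in>X - {u}. x \<noteq> y \<longrightarrow>
               upward_ray (P u) \<inter> line_through (P x) (P y) = {})"
proof -
  obtain Q where Q: "is_realization X ch Q" using assms(4) realizable_def by blast
  have Qo: "\<And>x y z. x\<in>X \<Longrightarrow> y\<in>X \<Longrightarrow> z\<in>X \<Longrightarrow> distinct3 x y z \<Longrightarrow>
      orient (Q x) (Q y) (Q z) \<noteq> 0 \<and> (ch x y z = 1 \<longleftrightarrow> orient (Q x) (Q y) (Q z) > 0)"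
    using Q unfolding is_realization_def by blast
  have uX: "u \<in> X" and "\<exists>y\<in>X. y \<noteq> u \<and> (\<exists>c. \<forall>z\<in>X - {u, y}. ch u y z = c)"
    using assms(3) unfolding rooted_chirotope_def extreme_def by auto
  then obtain y0 c where y0: "y0 \<in> X" "y0 \<noteq> u" and yc: "\<forall>z\<in>X - {u, y0}. ch u y0 z = c" by blast
  have "card (X - {u, y0}) = card X - 2"
    using assms(1) uX y0 by (subst card_Diff_subset) auto
  have "\<not> X \<subseteq> {u, y0}"
  proof
    assume "X \<subseteq> {u, y0}"
    then have "card X \<le> card {u, y0}" by (simp add: card_mono)
    moreover have "card {u, y0} \<le> 2" by (simp add: card_insert_if)
    ultimately show False using assms(2) by simp
  qed
  then have "X - {u, y0} \<noteq> {}" by auto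
  then obtain z0 where z0: "z0 \<in> X - {u, y0}" by blast
  define sg where "sg = (if orient (Q u) (Q y0) (Q z0) > 0 then 1 else -1::real)"
  have hpos: "sg * orient (Q u) (Q y0) (Q z) > 0" if z: "z \<in> X - {u, y0}" for z
  proof -
    have e: "ch u y0 z = ch u y0 z0" using yc z z0 by auto
    have o1: "orient (Q u) (Q y0) (Q z) \<noteq> 0 \<and> (ch u y0 z = 1 \<longleftrightarrow> orient (Q u) (Q y0) (Q z) > 0)"
      using Qo[of u y0 z] z uX y0 by (auto simp: distinct3_def)
    have o2: "orient (Q u) (Q y0) (Q z0) \<noteq> 0 \<and> (ch u y0 z0 = 1 \<longleftrightarrow> orient (Q u) (Q y0) (Q z0) > 0)"
      using Qo[of u y0 z0] z0 uX y0 by (auto simp: distinct3_def)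
    show ?thesis
    proof (cases "orient (Q u) (Q y0) (Q z0) > 0")
      case True
      then have "ch u y0 z = 1" using e o2 by simp
      then show ?thesis using o1 True unfolding sg_def by simp
    next
      case False
      then have "ch u y0 z \<noteq> 1" using e o2 by simp
      then have "orient (Q u) (Q y0) (Q z) < 0" using o1 by linarith
      then show ?thesis using False unfolding sg_def by simp
    qed
  qed
  have hnn: "sg * orient (Q u) (Q y0) (Q z) \<ge> 0" if z: "z \<in> X - {u}" for z
    using hpos[of z] z by (cases "z = y0") (auto simp: orient_same)
  define Rl where "Rl = (\<lambda>a b. orient (Q u) (Q a) (Q b) > 0)"
  have Rl_asym: "\<not> (Rl a b \<and> Rl b a)" for a b
    unfolding Rl_def using orient_swap[of "Q u" "Q a" "Q b"] by linarith
  have Rl_irr: "\<not> Rl a a" for a unfolding Rl_def by (simp add: orient_def)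
  have Rl_tot: "\<forall>a\<in>X - {u}. \<forall>b\<in>X - {u}. a \<noteq> b \<longrightarrow> Rl a b \<or> Rl b a"
  proof (intro ballI impI)
    fix a b assume ab: "a \<in> X - {u}" "b \<in> X - {u}" "a \<noteq> b"
    then have "orient (Q u) (Q a) (Q b) \<noteq> 0" using Qo[of u a b] uX by (auto simp: distinct3_def)
    then show "Rl a b \<or> Rl b a" unfolding Rl_def using orient_swap[of "Q u" "Q a" "Q b"] by linarith
  qed
  have Rl_trans: "\<forall>a\<in>X - {u}. \<forall>b\<in>X - {u}. \<forall>c\<in>X - {u}. Rl a b \<longrightarrow> Rl b c \<longrightarrow> Rl a c"
  proof (intro ballI impI)
    fix a b c assume abc: "a \<in> X - {u}" "b \<in> X - {u}" "c \<in> X - {u}" and r: "Rl a b" "Rl b c"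
    show "Rl a c"
    proof (rule ccontr)
      assume nr: "\<not> Rl a c"
      have "a \<noteq> b" "b \<noteq> c" using r Rl_irr by auto
      moreover have "a \<noteq> c" using r Rl_asym by auto
      ultimately have "orient (Q u) (Q a) (Q c) \<noteq> 0" using Qo[of u a c] uX abc by (auto simp: distinct3_def)
      then have "orient (Q u) (Q c) (Q a) > 0" using nr orient_swap[of "Q u" "Q a" "Q c"] unfolding Rl_def by linarith
      moreover have "sg * orient (Q u) (Q y0) (Q a) > 0 \<or> sg * orient (Q u) (Q y0) (Q b) > 0"
        using hpos[of a] hpos[of b] abc \<open>a \<noteq> b\<close> by auto
      moreover have "sg * orient (Q u) (Q y0) (Q a) \<ge> 0" "sg * orient (Q u) (Q y0) (Q b) \<ge> 0"
          "sg * orient (Q u) (Q y0) (Q c) \<ge> 0" using hnn abc by auto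
      moreover have "orient (Q u) (Q a) (Q b) > 0" "orient (Q u) (Q b) (Q c) > 0" using r unfolding Rl_def by auto
      ultimately show False using trans_geom[of "Q u" "Q a" "Q b" "Q c" sg "Q y0"] by blast
    qed
  qed
  have Sne: "X - {u} \<noteq> {}" using y0 by auto
  have fS: "finite (X - {u})" using assms(1) by auto
  obtain m where m: "m \<in> X - {u}" "\<forall>z\<in>X - {u}. z \<noteq> m \<longrightarrow> Rl m z"
    using finite_total_min[OF fS Sne, of Rl] Rl_trans Rl_tot by blast
  obtain M where M: "M \<in> X - {u}" "\<forall>z\<in>X - {u}. z \<noteq> M \<longrightarrow> Rl z M"
    using finite_total_min[OF fS Sne, of "\<lambda>a b. Rl b a"] Rl_trans Rl_tot by blast
  have "m \<noteq> M"
  proof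
    assume "m = M"
    obtain z where "z \<in> X - {u}" "z \<noteq> m" using z0 y0 by (cases "m = y0") auto
    then show False using m M \<open>m = M\<close> Rl_asym by blast
  qed
  then have RmM: "Rl m M" using m M by auto
  have succ_prop: "\<forall>z\<in>X - {u, m}. ch u m z = 1"
  proof
    fix z assume z: "z \<in> X - {u, m}"
    then show "ch u m z = 1" using m Qo[of u m z] uX unfolding Rl_def by (auto simp: distinct3_def)
  qed
  have pred_prop: "\<forall>z\<in>X - {u, M}. ch M u z = 1"
  proof
    fix z assume z: "z \<in> X - {u, M}"
    then have "orient (Q M) (Q u) (Q z) > 0" using M orient_cyc[of "Q M" "Q u" "Q z"] unfolding Rl_def by auto
    then show "ch M u z = 1" using M Qo[of M u z] uX z by (auto simp: distinct3_def)
  qed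
  have hs: "hull_succ X ch u = m"
    unfolding hull_succ_def
  proof (rule the_equality)
    show "m \<in> X \<and> m \<noteq> u \<and> (\<forall>z\<in>X - {u, m}. ch u m z = 1)" using m succ_prop by auto
  next
    fix y assume y: "y \<in> X \<and> y \<noteq> u \<and> (\<forall>z\<in>X - {u, y}. ch u y z = 1)"
    show "y = m"
    proof (rule ccontr)
      assume "y \<noteq> m"
      then have "ch u y m = 1" using y m by auto
      then have "Rl y m" using Qo[of u y m] uX y m \<open>y \<noteq> m\<close> unfolding Rl_def by (auto simp: distinct3_def)
      moreover have "Rl m y" using m y \<open>y \<noteq> m\<close> by auto
      ultimately show False using Rl_asym by blast
    qed
  qed
  have hp: "hull_pred X ch u = M"
    unfolding hull_pred_def
  proof (rule the_equality)
    show "M \<in> X \<and> M \<noteq> u \<and> (\<forall>z\<in>X - {u, M}. ch M u z = 1)" using M pred_prop by auto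
  next
    fix y assume y: "y \<in> X \<and> y \<noteq> u \<and> (\<forall>z\<in>X - {u, y}. ch y u z = 1)"
    show "y = M"
    proof (rule ccontr)
      assume "y \<noteq> M"
      then have "ch y u M = 1" using y M by auto
      then have "orient (Q y) (Q u) (Q M) > 0" using Qo[of y u M] uX y M \<open>y \<noteq> M\<close> by (auto simp: distinct3_def)
      then have "Rl M y" using orient_cyc[of "Q y" "Q u" "Q M"] unfolding Rl_def by simp
      moreover have "Rl y M" using M y \<open>y \<noteq> M\<close> by auto
      ultimately show False using Rl_asym by blast
    qed
  qed
  have mX: "m \<in> X" "m \<noteq> u" using m by auto
  have MX: "M \<in> X" "M \<noteq> u" using M by auto
  define a0 where "a0 = Q m"
  define e1 where "e1 = Q M - Q m"
  define e2 where "e2 = Q u - Q m"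
  define dd where "dd = fst e1 * snd e2 - snd e1 * fst e2"
  have dd_eq: "dd = orient (Q u) (Q m) (Q M)"
    unfolding dd_def e1_def e2_def orient_def by (simp add: algebra_simps)
  have ddpos: "dd > 0" using RmM dd_eq unfolding Rl_def by simp
  have ddnz: "fst e1 * snd e2 - snd e1 * fst e2 \<noteq> 0" using ddpos dd_def by simp
  define R where "R = (\<lambda>x. aff a0 e1 e2 (Q x))"
  have oR: "orient (R x) (R y) (R z) = (1 / dd) * orient (Q x) (Q y) (Q z)" for x y z
    unfolding R_def using orient_aff[OF ddnz] dd_def by simp
  have Rreal: "is_realization X ch R"
    by (rule realiz_transfer[OF Q]) (use ddpos in \<open>auto simp: oR zero_less_divide_iff\<close>)
  have Ru: "R u = (0, 1)" unfolding R_def using aff_pts(3)[OF ddnz, of a0] by (simp add: a0_def e2_def)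
  have Rm: "R m = (0, 0)" unfolding R_def using aff_pts(1)[OF ddnz, of a0] by (simp add: a0_def)
  have RM: "R M = (1, 0)" unfolding R_def using aff_pts(2)[OF ddnz, of a0] by (simp add: a0_def e1_def)
  have Ro: "\<And>x y z. x\<in>X \<Longrightarrow> y\<in>X \<Longrightarrow> z\<in>X \<Longrightarrow> distinct3 x y z \<Longrightarrow>
      orient (R x) (R y) (R z) \<noteq> 0 \<and> (ch x y z = 1 \<longleftrightarrow> orient (R x) (R y) (R z) > 0)"
    using Rreal unfolding is_realization_def by blast
  have Rsnd: "snd (R z) \<le> 1" if z: "z \<in> X" for z
  proof -
    consider "z = u" | "z = m" | "z = M" | "z \<in> X - {u, m, M}" using z by blast
    then show ?thesis
    proof cases
      case 1 then show ?thesis using Ru by simp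
    next
      case 2 then show ?thesis using Rm by simp
    next
      case 3 then show ?thesis using RM by simp
    next
      case 4
      have "ch u m z = 1" using succ_prop 4 by auto
      then have "orient (R u) (R m) (R z) > 0" using Ro[of u m z] 4 uX mX by (auto simp: distinct3_def)
      then have a: "fst (R z) > 0" using Ru Rm by (simp add: orient_def)
      have "ch M u z = 1" using pred_prop 4 by auto
      then have "orient (R M) (R u) (R z) > 0" using Ro[of M u z] 4 uX MX by (auto simp: distinct3_def)
      then have b: "1 - fst (R z) - snd (R z) > 0" using Ru RM by (simp add: orient_def algebra_simps)
      show ?thesis using a b by linarith
    qed
  qed
  define S2 where "S2 = {p \<in> (X - {u}) \<times> (X - {u}). fst p \<noteq> snd p}"
  define f where "f = (\<lambda>p. \<bar>orient (R (fst p)) (R (snd p)) (R u)\<bar> / (\<bar>fst (R (snd p)) - fst (R (fst p))\<bar> + 1))"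
  have fS2: "finite S2" using assms(1) unfolding S2_def by auto
  have fpos: "\<forall>p\<in>S2. f p > 0"
  proof
    fix p assume p: "p \<in> S2"
    then have "orient (R (fst p)) (R (snd p)) (R u) \<noteq> 0"
      using Ro[of "fst p" "snd p" u] uX unfolding S2_def by (auto simp: distinct3_def)
    then show "f p > 0" unfolding f_def by (simp add: add_nonneg_pos)
  qed
  obtain \<delta> where \<delta>: "\<delta> > 0" "\<forall>p\<in>S2. \<delta> \<le> f p" using finite_pos_lower[OF fS2 fpos] by blast
  define \<epsilon> where "\<epsilon> = \<delta> / (1 + \<delta>)"
  have \<epsilon>0: "0 < \<epsilon>" "\<epsilon> < 1" using \<delta> unfolding \<epsilon>_def by auto
  define P where "P = (\<lambda>x. hom \<epsilon> (R x))"
  have Dpos: "1 - (1 - \<epsilon>) * snd (R z) > 0" if "z \<in> X" for z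
    using D_pos[OF Rsnd[OF that] \<epsilon>0] .
  have oP: "orient (P x) (P y) (P z) = (\<epsilon> / ((1 - (1 - \<epsilon>) * snd (R x)) * (1 - (1 - \<epsilon>) * snd (R y)) * (1 - (1 - \<epsilon>) * snd (R z)))) * orient (R x) (R y) (R z)"
    if "x \<in> X" "y \<in> X" "z \<in> X" for x y z
    unfolding P_def using orient_hom[of \<epsilon> "R x" "R y" "R z"] Dpos[OF that(1)] Dpos[OF that(2)] Dpos[OF that(3)] by simp
  have Preal: "is_realization X ch P"
  proof (rule realiz_transfer[OF Rreal], intro ballI impI)
    fix x y z assume xyz: "x \<in> X" "y \<in> X" "z \<in> X" "distinct3 x y z"
    have "\<epsilon> / ((1 - (1 - \<epsilon>) * snd (R x)) * (1 - (1 - \<epsilon>) * snd (R y)) * (1 - (1 - \<epsilon>) * snd (R z))) > 0"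
      using Dpos xyz \<epsilon>0 by simp
    from pos_scale[OF this, of "orient (R x) (R y) (R z)"]
    show "(orient (P x) (P y) (P z) > 0 \<longleftrightarrow> orient (R x) (R y) (R z) > 0) \<and>
      (orient (P x) (P y) (P z) = 0 \<longleftrightarrow> orient (R x) (R y) (R z) = 0)" using oP[OF xyz(1-3)] by simp
  qed
  have Pu: "P u = (0, 1)" unfolding P_def Ru hom_def using \<epsilon>0 by simp
  have Pm: "P m = (0, 0)" unfolding P_def Rm hom_def by simp
  have PM: "P M = (1, 0)" unfolding P_def RM hom_def by simp
  have ray: "upward_ray (P u) \<inter> line_through (P a) (P b) = {}"
    if ab: "a \<in> X - {u}" "b \<in> X - {u}" "a \<noteq> b" for a b
  proof (rule ccontr)
    assume "upward_ray (P u) \<inter> line_through (P a) (P b) \<noteq> {}"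
    then obtain q where q1: "q \<in> upward_ray (P u)" and q2: "q \<in> line_through (P a) (P b)" by blast
    from q1 obtain t where t: "t \<ge> 0" "q = P u + t *\<^sub>R (0, 1)" unfolding upward_ray_def by auto
    from q2 obtain s where "q = P a + s *\<^sub>R (P b - P a)" unfolding line_through_def by auto
    then have o0: "orient (P a) (P b) q = 0" using orient_line by simp
    define T where "T = 1 + t"
    have T1: "T \<ge> 1" using t T_def by simp
    have qT: "q = (0, T)" using t Pu T_def by simp
    define den where "den = \<epsilon> + T * (1 - \<epsilon>)"
    have den: "den > 0" unfolding den_def using \<epsilon>0 T1 by (simp add: add_pos_nonneg)
    define Y where "Y = T / den"
    have DY: "1 - (1 - \<epsilon>) * Y = \<epsilon> / den" unfolding Y_def using den by (simp add: field_simps den_def)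
    have DYpos: "1 - (1 - \<epsilon>) * snd (0::real, Y) > 0" using DY den \<epsilon>0 by simp
    have hY: "hom \<epsilon> (0, Y) = (0, T)" unfolding hom_def using DY den \<epsilon>0 by (simp add: Y_def field_simps)
    have aX: "a \<in> X" and bX: "b \<in> X" using ab by auto
    have "orient (P a) (P b) (hom \<epsilon> (0, Y)) = 0" using o0 qT hY by simp
    then have "\<epsilon> * orient (R a) (R b) (0, Y) / ((1 - (1 - \<epsilon>) * snd (R a)) * (1 - (1 - \<epsilon>) * snd (R b)) * (1 - (1 - \<epsilon>) * snd (0::real, Y))) = 0"
      unfolding P_def using orient_hom[of \<epsilon> "R a" "R b" "(0, Y)"] Dpos[OF aX] Dpos[OF bX] DYpos by simp
    then have oz: "orient (R a) (R b) (0, Y) = 0" using Dpos[OF aX] Dpos[OF bX] DYpos \<epsilon>0 by simp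
    define g where "g = orient (R a) (R b) (R u)"
    define d where "d = fst (R b) - fst (R a)"
    have gY: "g + (Y - 1) * d = 0" using oz orient_vert[of "R a" "R b" Y] Ru unfolding g_def d_def by simp
    have "(a, b) \<in> S2" using ab unfolding S2_def by auto
    then have "\<delta> \<le> \<bar>g\<bar> / (\<bar>d\<bar> + 1)" using \<delta> unfolding f_def g_def d_def by auto
    then have gd: "\<delta> * (\<bar>d\<bar> + 1) \<le> \<bar>g\<bar>" by (simp add: pos_le_divide_eq add_nonneg_pos)
    have "den \<le> T"
    proof -
      have "\<epsilon> * (T - 1) \<ge> 0" using \<epsilon>0 T1 by simp
      moreover have "den = T - \<epsilon> * (T - 1)" unfolding den_def by (simp add: algebra_simps)
      ultimately show ?thesis by linarith
    qed
    then have Y1: "Y \<ge> 1" unfolding Y_def using den by simp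
    have e1: "(1 + \<delta>) * \<epsilon> = \<delta>" unfolding \<epsilon>_def using \<delta> by simp
    have e2: "(1 + \<delta>) * (1 - \<epsilon>) = 1" using e1 by (simp add: algebra_simps)
    have "(1 + \<delta>) * den = (1 + \<delta>) * \<epsilon> + T * ((1 + \<delta>) * (1 - \<epsilon>))" unfolding den_def by (simp add: algebra_simps)
    then have "(1 + \<delta>) * den = \<delta> + T" using e1 e2 by simp
    then have Y2: "Y < 1 + \<delta>" unfolding Y_def using den \<delta> by (simp add: divide_less_eq)
    have "\<bar>(Y - 1) * d\<bar> = (Y - 1) * \<bar>d\<bar>" using Y1 by (simp add: abs_mult)
    also have "\<dots> \<le> \<delta> * \<bar>d\<bar>" using Y1 Y2 by (intro mult_right_mono) auto
    also have "\<dots> < \<delta> * (\<bar>d\<bar> + 1)" using \<delta> by simp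
    finally have "\<bar>(Y - 1) * d\<bar> < \<bar>g\<bar>" using gd by linarith
    then show False using gY by linarith
  qed
  show ?thesis
    by (rule exI[of _ P]) (use Preal Pu Pm PM hs hp ray in auto)
qed

end
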